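(* Let $\Diamond_{ij;kl}$ be a hinge (edge $e_{ij}$ with faces $f_{ijk}$, $f_{ijl}$) with radii $p=r_k,q=r_i,r=r_l,s=r_j>0$ and inversive distances $a=I_{ki},b=I_{il},c=I_{lj},d=I_{jk},e=I_{ij}>1$, such that the edge lengths $l_{\alpha\beta}=\sqrt{r_\alpha^2+r_\beta^2+2I_{\alpha\beta}r_\alpha r_\beta}$ satisfy the triangle inequalities on both faces; develop the hinge into $\mathbb{E}^2$. Then $e_{ij}$ is local weighted Delaunay, i.e. $h_{ij,k}+h_{ij,l}\ge0$, if and only if \[\frac{\sqrt{\Delta_{bce}}}{p}+\frac{\sqrt{\Delta_{ade}}}{r}\le\frac{\sqrt{\Delta_{cdf}}}{q}+\frac{\sqrt{\Delta_{abf}}}{s},\] where $\Delta_{xyz}=x^2+y^2+z^2+2xyz-1$ and $f=\frac{ab+cd+ace+bde+\sqrt{\Delta_{ade}}\sqrt{\Delta_{bce}}}{e^2-1}$.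
   Context: For a Euclidean triangle $f_{ijk}$ with circles of radii $r_i,r_j,r_k$ at the vertices, $O_{ijk}$ denotes the center of the unique circle orthogonal to all three circles (equivalently the point with $|O_{ijk}v_\alpha|^2-r_\alpha^2$ equal for $\alpha=i,j,k$). $h_{ij,k}$ is the distance from $O_{ijk}$ to the line of $e_{ij}$, taken positive if $O_{ijk}$ and $v_k$ lie on the same side of $e_{ij}$ and negative otherwise; similarly $h_{ij,l}$ for $f_{ijl}$. *)

theory Defs
  imports "HOL-Analysis.Analysis"
begin

text \<open>The Euclidean plane is modelled as the complex plane.\<close>

definition cross2 :: "complex \<Rightarrow> complex \<Rightarrow> real" where
  "cross2 z w = Im (cnj z * w)"

definition Delta3 :: "real \<Rightarrow> real \<Rightarrow> real \<Rightarrow> real" where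
  "Delta3 x y z = x\<^sup>2 + y\<^sup>2 + z\<^sup>2 + 2*x*y*z - 1"

definition edge_len :: "real \<Rightarrow> real \<Rightarrow> real \<Rightarrow> real" where
  "edge_len r1 r2 I = sqrt (r1\<^sup>2 + r2\<^sup>2 + 2*I*r1*r2)"

text \<open>O is the centre of the circle orthogonal to the three vertex circles:
  equal power with respect to all three circles.\<close>
definition is_orth_center :: "complex \<Rightarrow> complex \<Rightarrow> real \<Rightarrow> complex \<Rightarrow> real \<Rightarrow> complex \<Rightarrow> real \<Rightarrow> bool" where
  "is_orth_center X v1 r1 v2 r2 v3 r3 \<longleftrightarrow>
     (dist X v1)\<^sup>2 - r1\<^sup>2 = (dist X v2)\<^sup>2 - r2\<^sup>2 \<and>
     (dist X v2)\<^sup>2 - r2\<^sup>2 = (dist X v3)\<^sup>2 - r3\<^sup>2"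

definition line_through :: "complex \<Rightarrow> complex \<Rightarrow> complex set" where
  "line_through a b = {a + of_real t * (b - a) | t. True}"

text \<open>Signed distance from O to the line through a,b: positive iff O lies on the
  same side of the line as c (the sign is irrelevant when O lies on the line).\<close>
definition signed_height :: "complex \<Rightarrow> complex \<Rightarrow> complex \<Rightarrow> complex \<Rightarrow> real" where
  "signed_height X a b c =
     (if cross2 (b - a) (X - a) * cross2 (b - a) (c - a) \<ge> 0
      then infdist X (line_through a b) else - infdist X (line_through a b))"

end

theory Submission
  imports Defs
begin


lemma core_tri:
  fixes p q s a d e lj xk hk x0 Yk :: real
  assumes pos: "p > 0" "q > 0" "s > 0" and e: "e > 1" and lj: "lj > 0"
    and L: "lj^2 = q^2+s^2+2*e*q* s"
    and K1: "xk^2+hk^2 = p^2+q^2+2*a*p*q"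
    and K2: "(xk-lj)^2+hk^2 = s^2+p^2+2*d* s*p"
    and O1: "x0^2+Yk^2-q^2 = (x0-lj)^2+Yk^2-s^2"
    and O2: "(x0-lj)^2+Yk^2-s^2 = (x0-xk)^2+(Yk-hk)^2-p^2"
  shows "Delta3 a d e * (p*q* s)^2 = hk^2 * ((lj*Yk)^2 + q^2* s^2*(e^2-1))"
    and "q^2* s^2*(e^2-1) - p*q* s^2*(a+e*d) - p*q^2* s*(d+e*a) = - (lj^2*hk*Yk)"
proof -
  have x0: "lj * x0 = q*(q+e* s)" using O1 L by (simp add: algebra_simps power2_eq_square)
  have xk: "lj * xk = q^2+e*q* s+a*p*q-d*p* s" using K1 K2 L by (simp add: algebra_simps power2_eq_square)
  have Y: "Yk * hk = q^2 + a*p*q - x0*xk" using O1 O2 K1 by (simp add: algebra_simps power2_eq_square)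
  have Y2: "lj^2*(Yk*hk) = lj^2*(q^2 + a*p*q) - (q*(q+e* s))*(q^2+e*q* s+a*p*q-d*p* s)"
  proof -
    have "lj^2*(Yk*hk) = lj^2*(q^2 + a*p*q) - (lj*x0)*(lj*xk)" unfolding Y by (simp add: algebra_simps power2_eq_square)
    then show ?thesis unfolding x0 xk .
  qed
  have H2: "lj^2*hk^2 = lj^2*(p^2+q^2+2*a*p*q) - (q^2+e*q* s+a*p*q-d*p* s)^2"
  proof -
    have "lj^2*hk^2 = lj^2*(xk^2+hk^2) - (lj*xk)^2" by (simp add: algebra_simps power2_eq_square)
    then show ?thesis unfolding K1 xk .
  qed
  show "q^2* s^2*(e^2-1) - p*q* s^2*(a+e*d) - p*q^2* s*(d+e*a) = - (lj^2*hk*Yk)"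
    using Y2 L by algebra
  have "lj^2 * (Delta3 a d e * (p*q* s)^2) = lj^2 * (hk^2 * ((lj*Yk)^2 + q^2* s^2*(e^2-1)))"
  proof -
    have "lj^2 * (hk^2 * ((lj*Yk)^2 + q^2* s^2*(e^2-1))) = (lj^2*(Yk*hk))^2 + (lj^2*hk^2)*q^2* s^2*(e^2-1)"
      by (simp add: algebra_simps power2_eq_square)
    also have "\<dots> = lj^2 * (Delta3 a d e * (p*q* s)^2)"
      unfolding Y2 H2 unfolding L Delta3_def by algebra
    finally show ?thesis by (rule sym)
  qed
  then show "Delta3 a d e * (p*q* s)^2 = hk^2 * ((lj*Yk)^2 + q^2* s^2*(e^2-1))" using lj by simp
qed


lemma sq_le_iff: "(u::real) \<ge> 0 \<Longrightarrow> v \<ge> 0 \<Longrightarrow> (u \<le> v \<longleftrightarrow> u^2 \<le> v^2)"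
  by (metis abs_of_nonneg abs_le_square_iff)

lemma keymono:
  fixes x y K :: real
  assumes K: "K > 0"
  shows "x * sqrt (y^2+K) + y * sqrt (x^2+K) \<ge> 0 \<longleftrightarrow> x + y \<ge> 0"
proof -
  define A where "A = sqrt (x^2+K)"
  define B where "B = sqrt (y^2+K)"
  have A: "A > 0" "A^2 = x^2+K" unfolding A_def using K by (auto intro: add_nonneg_pos)
  have B: "B > 0" "B^2 = y^2+K" unfolding B_def using K by (auto intro: add_nonneg_pos)
  have D: "(x*B)^2 - (y*A)^2 = K*(x^2 - y^2)" using A B by (simp add: power_mult_distrib algebra_simps)
  have "x * B + y * A \<ge> 0 \<longleftrightarrow> x + y \<ge> 0"
  proof (cases "x \<ge> 0")
    case x: True
    show ?thesis
    proof (cases "y \<ge> 0")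
      case True then show ?thesis using x A B by simp
    next
      case False
      have "x * B + y * A \<ge> 0 \<longleftrightarrow> (-y)*A \<le> x*B" by linarith
      also have "\<dots> \<longleftrightarrow> ((-y)*A)^2 \<le> (x*B)^2" using False x A B by (intro sq_le_iff) (auto intro: mult_nonpos_nonneg)
      also have "\<dots> \<longleftrightarrow> (-y)^2 \<le> x^2" using D K by (simp add: algebra_simps) (smt (verit) mult_le_cancel_left_pos)
      also have "\<dots> \<longleftrightarrow> -y \<le> x" using False x by (intro sq_le_iff[symmetric]) auto
      finally show ?thesis by linarith
    qed
  next
    case x: False
    show ?thesis
    proof (cases "y \<ge> 0")
      case True
      have "x * B + y * A \<ge> 0 \<longleftrightarrow> (-x)*B \<le> y*A" by linarith
      also have "\<dots> \<longleftrightarrow> ((-x)*B)^2 \<le> (y*A)^2" using True x A B by (intro sq_le_iff) (auto intro: mult_nonpos_nonneg)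
      also have "\<dots> \<longleftrightarrow> (-x)^2 \<le> y^2" using D K by (simp add: algebra_simps) (smt (verit) mult_le_cancel_left_pos)
      also have "\<dots> \<longleftrightarrow> -x \<le> y" using True x by (intro sq_le_iff[symmetric]) auto
      finally show ?thesis by linarith
    next
      case False
      have "x*B < 0" "y*A < 0" using x False A B by (auto simp: mult_neg_pos)
      then show ?thesis using x False by linarith
    qed
  qed
  thus ?thesis unfolding A_def B_def .
qed

lemma deltaC:
  fixes a b c d e Vk Vl :: real
  assumes e: "e > 1" and hk: "Vk^2 = Delta3 b c e" and hl: "Vl^2 = Delta3 a d e"
  shows "Delta3 c d ((a*b + c*d + a*c*e + b*d*e + Vl*Vk)/(e^2-1)) = (((a+e*d)*Vk + (b+e*c)*Vl)/(e^2-1))^2"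
proof -
  have E: "e^2 - 1 > 0" using one_less_power[OF e, of 2] by simp
  have ne: "e^2 - 1 \<noteq> 0" using E by simp
  have "Delta3 c d ((a*b + c*d + a*c*e + b*d*e + Vl*Vk)/(e^2-1)) * (e^2-1)^2 = ((a+e*d)*Vk + (b+e*c)*Vl)^2"
    using hk hl unfolding Delta3_def using ne
    apply (simp add: field_simps)
    by algebra
  then show ?thesis using E by (simp add: field_simps power_divide)
qed

lemma deltaD:
  fixes a b c d e Vk Vl :: real
  assumes e: "e > 1" and hk: "Vk^2 = Delta3 b c e" and hl: "Vl^2 = Delta3 a d e"
  shows "Delta3 a b ((a*b + c*d + a*c*e + b*d*e + Vl*Vk)/(e^2-1)) = (((d+e*a)*Vk + (c+e*b)*Vl)/(e^2-1))^2"
proof -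
  have E: "e^2 - 1 > 0" using one_less_power[OF e, of 2] by simp
  have ne: "e^2 - 1 \<noteq> 0" using E by simp
  have "Delta3 a b ((a*b + c*d + a*c*e + b*d*e + Vl*Vk)/(e^2-1)) * (e^2-1)^2 = ((d+e*a)*Vk + (c+e*b)*Vl)^2"
    using hk hl unfolding Delta3_def using ne
    apply (simp add: field_simps)
    by algebra
  then show ?thesis using E by (simp add: field_simps power_divide)
qed

lemma Delta_pos: "x > 1 \<Longrightarrow> y > 1 \<Longrightarrow> z > (1::real) \<Longrightarrow> Delta3 x y z > 0"
  unfolding Delta3_def
proof -
  assume "x > 1" "y > 1" "z > 1"
  then have "x^2 > 1" "x*y*z > 0" "y^2 \<ge> 0" "z^2 \<ge> 0"
    using one_less_power[of x 2] by auto
  then show "x\<^sup>2 + y\<^sup>2 + z\<^sup>2 + 2 * x * y * z - 1 > 0" by linarith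
qed


lemma pos_mult_iff:
  fixes c Y :: real
  assumes "c > 0"
  shows "0 \<le> Y * c \<longleftrightarrow> 0 \<le> Y" "0 \<le> c * Y \<longleftrightarrow> 0 \<le> Y"
  using mult_le_cancel_right_pos[OF assms, of 0 Y] mult_le_cancel_left_pos[OF assms, of 0 Y] by simp_all

lemma core:
  fixes p q r s a b c d e lj xk hk xl hl x0 Yk x1 Yl :: real
  assumes pos: "p > 0" "q > 0" "r > 0" "s > 0"
    and inv: "a > 1" "b > 1" "c > 1" "d > 1" "e > 1" and lj: "lj > 0"
    and L: "lj^2 = q^2+s^2+2*e*q* s"
    and K1: "xk^2+hk^2 = p^2+q^2+2*a*p*q"
    and K2: "(xk-lj)^2+hk^2 = s^2+p^2+2*d* s*p"
    and M1: "xl^2+hl^2 = r^2+q^2+2*b*r*q"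
    and M2: "(xl-lj)^2+hl^2 = s^2+r^2+2*c* s*r"
    and hk: "hk > 0" and hl: "hl > 0"
    and O1: "x0^2+Yk^2-q^2 = (x0-lj)^2+Yk^2-s^2"
    and O2: "(x0-lj)^2+Yk^2-s^2 = (x0-xk)^2+(Yk-hk)^2-p^2"
    and P1: "x1^2+Yl^2-q^2 = (x1-lj)^2+Yl^2-s^2"
    and P2: "(x1-lj)^2+Yl^2-s^2 = (x1-xl)^2+(Yl-hl)^2-r^2"
  shows "Yk + Yl \<ge> 0 \<longleftrightarrow>
    (let f = (a*b + c*d + a*c*e + b*d*e + sqrt (Delta3 a d e) * sqrt (Delta3 b c e)) / (e\<^sup>2 - 1)
     in sqrt (Delta3 b c e) / p + sqrt (Delta3 a d e) / r
        \<le> sqrt (Delta3 c d f) / q + sqrt (Delta3 a b f) / s)"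
proof -
  define E where "E = e^2 - 1"
  have E: "E > 0" unfolding E_def using one_less_power[OF inv(5), of 2] by simp
  define K where "K = q^2 * s^2 * E"
  have Kp: "K > 0" unfolding K_def using E pos by simp
  define Vk where "Vk = sqrt (Delta3 b c e)"
  define Vl where "Vl = sqrt (Delta3 a d e)"
  have Vk: "Vk > 0" "Vk^2 = Delta3 b c e" unfolding Vk_def using Delta_pos[of b c e] inv by auto
  have Vl: "Vl > 0" "Vl^2 = Delta3 a d e" unfolding Vl_def using Delta_pos[of a d e] inv by auto
  note tk = core_tri[OF pos(1) pos(2) pos(4) inv(5) lj L K1 K2 O1 O2]
  note tl = core_tri[OF pos(3) pos(2) pos(4) inv(5) lj L M1 M2 P1 P2]
  define As where "As = sqrt ((lj*Yk)^2 + K)"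
  define Bs where "Bs = sqrt ((lj*Yl)^2 + K)"
  have As: "Vl * (p*q* s) = hk * As"
  proof -
    have "Vl * (p*q* s) = sqrt (Delta3 a d e * (p*q* s)^2)" unfolding Vl_def using pos
      by (simp add: real_sqrt_mult)
    also have "\<dots> = sqrt (hk^2 * ((lj*Yk)^2 + K))" using tk(1) unfolding K_def E_def by simp
    also have "\<dots> = hk * As" unfolding As_def using hk by (simp add: real_sqrt_mult)
    finally show ?thesis .
  qed
  have Bs: "Vk * (r*q* s) = hl * Bs"
  proof -
    have "Vk * (r*q* s) = sqrt (Delta3 b c e * (r*q* s)^2)" unfolding Vk_def using pos
      by (simp add: real_sqrt_mult)
    also have "\<dots> = sqrt (hl^2 * ((lj*Yl)^2 + K))" using tl(1) unfolding K_def E_def by simp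
    also have "\<dots> = hl * Bs" unfolding Bs_def using hl by (simp add: real_sqrt_mult)
    finally show ?thesis .
  qed
  define f where "f = (a*b + c*d + a*c*e + b*d*e + Vl * Vk) / E"
  have SC: "sqrt (Delta3 c d f) = ((a+e*d)*Vk + (b+e*c)*Vl)/E"
    unfolding f_def E_def using deltaC[OF inv(5) Vk(2) Vl(2)] Vk Vl E inv
    by (simp add: E_def)
  have SD: "sqrt (Delta3 a b f) = ((d+e*a)*Vk + (c+e*b)*Vl)/E"
    unfolding f_def E_def using deltaD[OF inv(5) Vk(2) Vl(2)] Vk Vl E inv
    by (simp add: E_def)
  define X where "X = Vk / p + Vl / r - ((a+e*d)*Vk + (b+e*c)*Vl)/E / q - ((d+e*a)*Vk + (c+e*b)*Vl)/E / s"
  have X1: "X * (p*q^2*r* s^2*E) = - (lj^2 * (Vk*r*hk*Yk + Vl*p*hl*Yl))"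
  proof -
    have "X * (p*q^2*r* s^2*E) = Vk*r*(K - p*q* s^2*(a+e*d) - p*q^2* s*(d+e*a))
        + Vl*p*(K - r*q* s^2*(b+e*c) - r*q^2* s*(c+e*b))"
      unfolding X_def K_def using pos E by (simp add: field_simps) (simp add: algebra_simps power2_eq_square)
    also have "\<dots> = - (lj^2 * (Vk*r*hk*Yk + Vl*p*hl*Yl))"
      using tk(2) tl(2) unfolding K_def E_def by algebra
    finally show ?thesis .
  qed
  have X2: "(Vk*r*hk*Yk + Vl*p*hl*Yl) * (q* s) = hk*hl*((lj*Yk)*Bs + (lj*Yl)*As) / lj"
  proof -
    have "(Vk*r*hk*Yk + Vl*p*hl*Yl) * (q* s) = (Vk*(r*q* s))*hk*Yk + (Vl*(p*q* s))*hl*Yl"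
      by (simp add: algebra_simps)
    also have "\<dots> = hk*hl*((lj*Yk)*Bs + (lj*Yl)*As) / lj" unfolding As Bs using lj
      by (simp add: field_simps)
    finally show ?thesis .
  qed
  have "X \<le> 0 \<longleftrightarrow> Vk*r*hk*Yk + Vl*p*hl*Yl \<ge> 0"
  proof -
    have pp: "p*q^2*r* s^2*E > 0" using pos E by simp
    have cc: "\<And>c Y. c > 0 \<Longrightarrow> (Y*(c::real) \<le> 0 \<longleftrightarrow> Y \<le> 0)"
      by (metis mult_le_cancel_right_pos mult_zero_left)
    have "X \<le> 0 \<longleftrightarrow> X * (p*q^2*r* s^2*E) \<le> 0" using cc[OF pp] by simp
    also have "\<dots> \<longleftrightarrow> Vk*r*hk*Yk + Vl*p*hl*Yl \<ge> 0" unfolding X1 using lj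
      by (simp add: zero_le_mult_iff)
    finally show ?thesis .
  qed
  also have "\<dots> \<longleftrightarrow> (lj*Yk)*Bs + (lj*Yl)*As \<ge> 0"
  proof -
    have qs: "q* s > 0" "hk*hl/lj > 0" using pos hk hl lj by auto
    have "Vk*r*hk*Yk + Vl*p*hl*Yl \<ge> 0 \<longleftrightarrow> (Vk*r*hk*Yk + Vl*p*hl*Yl) * (q* s) \<ge> 0"
      using pos_mult_iff(1)[OF qs(1)] by simp
    also have "\<dots> \<longleftrightarrow> (hk*hl/lj) * ((lj*Yk)*Bs + (lj*Yl)*As) \<ge> 0" unfolding X2 by simp
    also have "\<dots> \<longleftrightarrow> (lj*Yk)*Bs + (lj*Yl)*As \<ge> 0" using pos_mult_iff(2)[OF qs(2)] by simp
    finally show ?thesis .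
  qed
  also have "\<dots> \<longleftrightarrow> lj*Yk + lj*Yl \<ge> 0" unfolding As_def Bs_def by (rule keymono[OF Kp])
  also have "\<dots> \<longleftrightarrow> Yk + Yl \<ge> 0" using lj
    by (metis distrib_left zero_le_mult_iff linorder_not_le order_less_imp_le)
  finally have main: "X \<le> 0 \<longleftrightarrow> Yk + Yl \<ge> 0" .
  have "(let f = (a*b + c*d + a*c*e + b*d*e + sqrt (Delta3 a d e) * sqrt (Delta3 b c e)) / (e\<^sup>2 - 1)
     in sqrt (Delta3 b c e) / p + sqrt (Delta3 a d e) / r
        \<le> sqrt (Delta3 c d f) / q + sqrt (Delta3 a b f) / s) \<longleftrightarrow> X \<le> 0"
    unfolding Let_def Vk_def[symmetric] Vl_def[symmetric] E_def[symmetric] f_def[symmetric] SC SD X_def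
    by linarith
  then show ?thesis using main by simp
qed



lemma infdist_line:
  fixes X vi vj :: complex
  assumes "vi \<noteq> vj"
  shows "infdist X (line_through vi vj) = \<bar>cross2 (vj - vi) (X - vi)\<bar> / cmod (vj - vi)"
proof -
  define w where "w = vj - vi"
  have w0: "w \<noteq> 0" using assms unfolding w_def by simp
  have lw: "cmod w > 0" using w0 by simp
  have cw: "cnj w * w = of_real ((cmod w)^2)" using complex_norm_square[of w] by (simp add: mult.commute)
  define m where "m = \<bar>Im (cnj w * (X - vi))\<bar> / cmod w"
  have lb: "m \<le> dist X (vi + of_real t * w)" for t
  proof -
    have "Im (cnj w * (X - (vi + of_real t * w))) = Im (cnj w * (X - vi)) - t * Im (cnj w * w)"
      by (simp add: algebra_simps)
    also have "Im (cnj w * w) = 0" unfolding cw by simp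
    finally have eq: "Im (cnj w * (X - (vi + of_real t * w))) = Im (cnj w * (X - vi))" by simp
    have "\<bar>Im (cnj w * (X - vi))\<bar> \<le> cmod (cnj w * (X - (vi + of_real t * w)))"
      unfolding eq[symmetric] by (rule abs_Im_le_cmod)
    also have "\<dots> = cmod w * dist X (vi + of_real t * w)" by (simp add: norm_mult dist_norm)
    finally show ?thesis unfolding m_def using lw by (simp add: divide_le_eq mult.commute)
  qed
  define t0 where "t0 = Re (cnj w * (X - vi)) / (cmod w)^2"
  have at: "dist X (vi + of_real t0 * w) = m"
  proof -
    have "cnj w * (X - (vi + of_real t0 * w)) = cnj w * (X - vi) - of_real t0 * (cnj w * w)"
      by (simp add: algebra_simps)
    also have "\<dots> = cnj w * (X - vi) - of_real (Re (cnj w * (X - vi)))"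
      unfolding cw t0_def using lw by (simp flip: of_real_mult)
    also have "\<dots> = \<i> * of_real (Im (cnj w * (X - vi)))"
      by (simp add: complex_eq_iff)
    finally have "cmod (cnj w * (X - (vi + of_real t0 * w))) = cmod (\<i> * of_real (Im (cnj w * (X - vi))))"
      by (rule arg_cong)
    also have "\<dots> = \<bar>Im (cnj w * (X - vi))\<bar>" by (simp only: norm_mult norm_ii norm_of_real mult_1)
    finally have "cmod (cnj w * (X - (vi + of_real t0 * w))) = \<bar>Im (cnj w * (X - vi))\<bar>" .
    then have "cmod w * dist X (vi + of_real t0 * w) = \<bar>Im (cnj w * (X - vi))\<bar>"
      by (simp add: norm_mult dist_norm)
    then show ?thesis unfolding m_def using lw by (simp add: field_simps)
  qed
  have line: "line_through vi vj = (\<lambda>t. vi + of_real t * w) ` UNIV"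
    unfolding line_through_def w_def by auto
  have ne: "line_through vi vj \<noteq> {}" unfolding line by simp
  have "infdist X (line_through vi vj) = m"
  proof (rule antisym)
    show "infdist X (line_through vi vj) \<le> m"
    proof -
      have "vi + of_real t0 * w \<in> line_through vi vj" unfolding line by blast
      then show ?thesis using infdist_le[of "vi + of_real t0 * w" "line_through vi vj" X] at by simp
    qed
    show "m \<le> infdist X (line_through vi vj)"
      unfolding infdist_notempty[OF ne] unfolding line
      by (rule cINF_greatest) (auto simp: lb)
  qed
  then show ?thesis unfolding m_def cross2_def w_def .
qed


lemma edge_len_sq: "x > 0 \<Longrightarrow> y > 0 \<Longrightarrow> I > 1 \<Longrightarrow> (edge_len x y I)^2 = x^2+y^2+2*I*x*y"
  unfolding edge_len_def
  by (subst real_sqrt_pow2) (auto intro!: add_nonneg_nonneg)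

lemma edge_len_pos: "x > 0 \<Longrightarrow> y > 0 \<Longrightarrow> I > 1 \<Longrightarrow> edge_len x y I > 0"
  unfolding edge_len_def by (auto intro!: add_pos_nonneg)

theorem lemma4p5:
  fixes p q r s a b c d e :: real
    and vi vj vk vl Oijk Oijl :: complex
  assumes pos: "p > 0" "q > 0" "r > 0" "s > 0"
    and inv: "a > 1" "b > 1" "c > 1" "d > 1" "e > 1"
    and tri_ijk: "edge_len q s e < edge_len s p d + edge_len p q a"
                 "edge_len s p d < edge_len q s e + edge_len p q a"
                 "edge_len p q a < edge_len q s e + edge_len s p d"
    and tri_ijl: "edge_len q s e < edge_len s r c + edge_len r q b"
                 "edge_len s r c < edge_len q s e + edge_len r q b"
                 "edge_len r q b < edge_len q s e + edge_len s r c"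
    and len: "dist vi vj = edge_len q s e" "dist vk vi = edge_len p q a"
             "dist vj vk = edge_len s p d" "dist vi vl = edge_len q r b"
             "dist vl vj = edge_len r s c"
    and opp: "cross2 (vj - vi) (vk - vi) * cross2 (vj - vi) (vl - vi) < 0"
    and Ok: "is_orth_center Oijk vi q vj s vk p"
    and Ol: "is_orth_center Oijl vi q vj s vl r"
  shows "signed_height Oijk vi vj vk + signed_height Oijl vi vj vl \<ge> 0 \<longleftrightarrow>
    (let f = (a*b + c*d + a*c*e + b*d*e + sqrt (Delta3 a d e) * sqrt (Delta3 b c e)) / (e\<^sup>2 - 1)
     in sqrt (Delta3 b c e) / p + sqrt (Delta3 a d e) / r
        \<le> sqrt (Delta3 c d f) / q + sqrt (Delta3 a b f) / s)"
proof -
  define w where "w = vj - vi"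
  define lj where "lj = cmod w"
  have lj_eq: "lj = edge_len q s e" using len(1) unfolding lj_def w_def by (simp add: dist_norm norm_minus_commute)
  have lj: "lj > 0" unfolding lj_eq using pos inv by (intro edge_len_pos) auto
  have L: "lj^2 = q^2+s^2+2*e*q* s" unfolding lj_eq using pos inv by (subst edge_len_sq) auto
  have w0: "w \<noteq> 0" using lj unfolding lj_def by auto
  have vij: "vi \<noteq> vj" using w0 unfolding w_def by auto
  have cw: "cnj w * w = of_real (lj^2)" unfolding lj_def using complex_norm_square[of w] by (simp add: mult.commute)
  define Z where "Z X = cnj w * (X - vi) / of_real lj" for X
  have Zd: "(dist X Y)^2 = (Re (Z X) - Re (Z Y))^2 + (Im (Z X) - Im (Z Y))^2" for X Y
  proof -
    have "Z X - Z Y = cnj w * (X - Y) / of_real lj" unfolding Z_def by (simp add: diff_divide_distrib[symmetric] algebra_simps)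
    then have "cmod (Z X - Z Y) = dist X Y" using lj by (simp add: norm_mult norm_divide dist_norm lj_def)
    then show ?thesis using cmod_power2[of "Z X - Z Y"] by simp
  qed
  have Zi: "Z vi = 0" unfolding Z_def by simp
  have Zj: "Z vj = of_real lj"
  proof -
    have "Z vj = cnj w * w / of_real lj" unfolding Z_def w_def by simp
    also have "\<dots> = of_real (lj^2) / of_real lj" unfolding cw ..
    also have "\<dots> = of_real lj" using lj by (simp add: power2_eq_square)
    finally show ?thesis .
  qed
  have cr: "cross2 w (X - vi) = lj * Im (Z X)" for X
  proof -
    have "cnj w * (X - vi) = of_real lj * Z X" unfolding Z_def using lj by simp
    then show ?thesis unfolding cross2_def by simp
  qed
  have sh: "signed_height X vi vj V = (if Im (Z X) * Im (Z V) \<ge> 0 then \<bar>Im (Z X)\<bar> else - \<bar>Im (Z X)\<bar>)" for X V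
  proof -
    have "infdist X (line_through vi vj) = \<bar>Im (Z X)\<bar>"
      unfolding infdist_line[OF vij] w_def[symmetric] cr lj_def[symmetric] using lj by (simp add: abs_mult)
    moreover have "cross2 w (X - vi) * cross2 w (V - vi) \<ge> 0 \<longleftrightarrow> Im (Z X) * Im (Z V) \<ge> 0"
      unfolding cr using lj by (simp add: algebra_simps zero_le_mult_iff)
    ultimately show ?thesis unfolding signed_height_def w_def by simp
  qed
  define xk where "xk = Re (Z vk)"
  define yk where "yk = Im (Z vk)"
  define xl where "xl = Re (Z vl)"
  define yl where "yl = Im (Z vl)"
  define x0 where "x0 = Re (Z Oijk)"
  define y0 where "y0 = Im (Z Oijk)"
  define x1 where "x1 = Re (Z Oijl)"
  define y1 where "y1 = Im (Z Oijl)"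
  have Zi': "Re (Z vi) = 0" "Im (Z vi) = 0" using Zi by simp_all
  have Zj': "Re (Z vj) = lj" "Im (Z vj) = 0" using Zj by simp_all
  have D1: "xk^2+yk^2 = p^2+q^2+2*a*p*q"
    using Zd[of vk vi] len(2) edge_len_sq[of p q a] pos inv unfolding xk_def yk_def Zi' by simp
  have D2: "(xk-lj)^2+yk^2 = s^2+p^2+2*d* s*p"
    using Zd[of vj vk] len(3) edge_len_sq[of s p d] pos inv unfolding xk_def yk_def Zj'
    by (simp add: power2_commute)
  have D3: "xl^2+yl^2 = r^2+q^2+2*b*r*q"
    using Zd[of vi vl] len(4) edge_len_sq[of q r b] pos inv unfolding xl_def yl_def Zi'
    by (simp add: algebra_simps)
  have D4: "(xl-lj)^2+yl^2 = s^2+r^2+2*c* s*r"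
    using Zd[of vl vj] len(5) edge_len_sq[of r s c] pos inv unfolding xl_def yl_def Zj'
    by (simp add: algebra_simps)
  have O1: "x0^2+y0^2-q^2 = (x0-lj)^2+y0^2-s^2"
    and O2: "(x0-lj)^2+y0^2-s^2 = (x0-xk)^2+(y0-yk)^2-p^2"
    using Ok unfolding is_orth_center_def Zd Zi' Zj' x0_def y0_def xk_def yk_def by simp_all
  have P1: "x1^2+y1^2-q^2 = (x1-lj)^2+y1^2-s^2"
    and P2: "(x1-lj)^2+y1^2-s^2 = (x1-xl)^2+(y1-yl)^2-r^2"
    using Ol unfolding is_orth_center_def Zd Zi' Zj' x1_def y1_def xl_def yl_def by simp_all
  have yy: "yk * yl < 0"
  proof -
    have "(lj*yk)*(lj*yl) < 0" using opp unfolding w_def[symmetric] cr yk_def yl_def .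
    then have "lj^2 * (yk*yl) < 0" by (simp add: algebra_simps power2_eq_square)
    then show ?thesis using lj by (simp add: mult_less_0_iff)
  qed
  have shk: "signed_height Oijk vi vj vk = (if y0 * yk \<ge> 0 then \<bar>y0\<bar> else - \<bar>y0\<bar>)"
    unfolding sh y0_def yk_def ..
  have shl: "signed_height Oijl vi vj vl = (if y1 * yl \<ge> 0 then \<bar>y1\<bar> else - \<bar>y1\<bar>)"
    unfolding sh y1_def yl_def ..
  show ?thesis
  proof (cases "yk > 0")
    case True
    then have yl: "yl < 0" using yy by (simp add: mult_less_0_iff)
    have "signed_height Oijk vi vj vk = y0" unfolding shk using True by (auto simp: zero_le_mult_iff)
    moreover have "signed_height Oijl vi vj vl = - y1" unfolding shl using yl by (auto simp: zero_le_mult_iff)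
    moreover have "y0 + (- y1) \<ge> 0 \<longleftrightarrow> (let f = (a*b + c*d + a*c*e + b*d*e + sqrt (Delta3 a d e) * sqrt (Delta3 b c e)) / (e\<^sup>2 - 1)
     in sqrt (Delta3 b c e) / p + sqrt (Delta3 a d e) / r
        \<le> sqrt (Delta3 c d f) / q + sqrt (Delta3 a b f) / s)"
    proof (rule core[OF pos inv lj L D1 D2 _ _ True _ O1 O2])
      show "xl^2 + (-yl)^2 = r^2+q^2+2*b*r*q" using D3 by simp
      show "(xl-lj)^2 + (-yl)^2 = s^2+r^2+2*c* s*r" using D4 by simp
      show "0 < - yl" using yl by simp
      show "x1^2+(-y1)^2-q^2 = (x1-lj)^2+(-y1)^2-s^2" using P1 by simp
      show "(x1-lj)^2+(-y1)^2-s^2 = (x1-xl)^2+(-y1-(-yl))^2-r^2" using P2 by (simp add: power2_commute)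
    qed
    ultimately show ?thesis by simp
  next
    case False
    then have yk: "yk < 0" using yy by (cases "yk = 0") auto
    then have yl: "yl > 0" using yy by (simp add: mult_less_0_iff)
    have "signed_height Oijk vi vj vk = - y0" unfolding shk using yk by (auto simp: zero_le_mult_iff)
    moreover have "signed_height Oijl vi vj vl = y1" unfolding shl using yl by (auto simp: zero_le_mult_iff)
    moreover have "(- y0) + y1 \<ge> 0 \<longleftrightarrow> (let f = (a*b + c*d + a*c*e + b*d*e + sqrt (Delta3 a d e) * sqrt (Delta3 b c e)) / (e\<^sup>2 - 1)
     in sqrt (Delta3 b c e) / p + sqrt (Delta3 a d e) / r
        \<le> sqrt (Delta3 c d f) / q + sqrt (Delta3 a b f) / s)"
    proof (rule core[OF pos inv lj L _ _ D3 D4 _ yl _ _ P1 P2])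
      show "xk^2 + (-yk)^2 = p^2+q^2+2*a*p*q" using D1 by simp
      show "(xk-lj)^2 + (-yk)^2 = s^2+p^2+2*d* s*p" using D2 by simp
      show "0 < - yk" using yk by simp
      show "x0^2+(-y0)^2-q^2 = (x0-lj)^2+(-y0)^2-s^2" using O1 by simp
      show "(x0-lj)^2+(-y0)^2-s^2 = (x0-xk)^2+(-y0-(-yk))^2-p^2" using O2 by (simp add: power2_commute)
    qed
    ultimately show ?thesis by simp
  qed
qed

end
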